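(* There is a function $\varepsilon(n)=o(n)$ such that for all sufficiently large $n$ and all integers $k$ with $\sqrt n\le k\le n$, $$d(k,n)\le 2k\sqrt n-n+\varepsilon(n).$$
   Context: $[n]=\{1,\dots,n\}$; for $A\subset\mathbb Z$, $A-A=\{a-b:a,b\in A\}$. Define $d(k,n)=\max\{|A-A|: A\subseteq[n],\ |A|=k\}$. *)

theory Defs
  imports Complex_Main "HOL-Library.Landau_Symbols"
begin

definition diffset :: "int set \<Rightarrow> int set" where
  "diffset A = {a - b | a b. a \<in> A \<and> b \<in> A}"

definition dkn :: "nat \<Rightarrow> nat \<Rightarrow> nat" where
  "dkn k n = Max {card (diffset A) | A. A \<subseteq> {1..int n} \<and> card A = k}"

end

theory Submission imports Defs begin

lemma sum_distinct_pos:
  fixes S :: "int set"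
  assumes "finite S" "\<forall>s\<in>S. s \<ge> 1"
  shows "int (card S) * (int (card S) + 1) \<le> 2 * \<Sum> S"
  using assms
proof (induction "card S" arbitrary: S)
  case 0
  then show ?case by simp
next
  case (Suc c)
  then have ne: "S \<noteq> {}" by auto
  define M where "M = Max S"
  have MS: "M \<in> S" using Suc ne M_def by simp
  have c: "card (S - {M}) = c" using Suc MS by simp
  have IH: "int c * (int c + 1) \<le> 2 * \<Sum> (S - {M})"
    using Suc.hyps(1)[of "S - {M}"] c Suc.prems by auto
  have sub: "S \<subseteq> {1..M}" using Suc.prems M_def by auto
  have "card S \<le> card {1..M}" using card_mono[OF _ sub] by simp
  then have "int (card S) \<le> M" using MS Suc.prems by auto
  moreover have "\<Sum> S = M + \<Sum> (S - {M})"
    using Suc.prems(1) MS by (simp add: sum.remove)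
  ultimately show ?case using IH Suc.hyps(2)[symmetric] by (simp add: algebra_simps)
qed

lemma card_pairs: "2 * card {(i::nat,j). i<j \<and> j<K} = K*(K-1)"
proof (induction K)
  case 0 then show ?case by simp
next
  case (Suc K)
  have e: "{(i::nat,j). i<j \<and> j<Suc K} = {(i::nat,j). i<j \<and> j<K} \<union> (\<lambda>i. (i,K)) ` {..<K}"
    by auto
  have f: "finite {(i::nat,j). i<j \<and> j<K}"
    by (rule finite_subset[of _ "{..<K} \<times> {..<K}"]) auto
  have d: "{(i::nat,j). i<j \<and> j<K} \<inter> (\<lambda>i. (i,K)) ` {..<K} = {}" by auto
  have "card {(i::nat,j). i<j \<and> j<Suc K} = card {(i::nat,j). i<j \<and> j<K} + K"
    unfolding e using f d by (simp add: card_Un_disjoint card_image inj_on_def)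
  then show ?case using Suc by (cases K) (auto simp: algebra_simps)
qed

lemma telescope:
  fixes f :: "nat \<Rightarrow> int"
  assumes "\<forall>i<k. 1 \<le> f i \<and> f i \<le> n" "d \<le> k"
  shows "(\<Sum>i<k-d. f (i+d) - f i) \<le> int d * (n - 1)"
proof -
  have "(\<Sum>i<k-d. f (i+d) - f i) = (\<Sum>i<k-d. \<Sum>t<d. f (Suc (i+t)) - f (i+t))"
  proof (rule sum.cong[OF refl])
    fix i show "f (i+d) - f i = (\<Sum>t<d. f (Suc (i+t)) - f (i+t))"
      using sum_lessThan_telescope[of "\<lambda>t. f (i+t)" d] by simp
  qed
  also have "\<dots> = (\<Sum>t<d. \<Sum>i<k-d. f (Suc (i+t)) - f (i+t))" by (rule sum.swap)
  also have "\<dots> = (\<Sum>t<d. f (k-d+t) - f t)"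
  proof (rule sum.cong[OF refl])
    fix t show "(\<Sum>i<k-d. f (Suc (i+t)) - f (i+t)) = f (k-d+t) - f t"
      using sum_lessThan_telescope[of "\<lambda>i. f (i+t)" "k-d"] by simp
  qed
  also have "\<dots> \<le> (\<Sum>t<d. n - 1)"
  proof (rule sum_mono)
    fix t assume "t \<in> {..<d}"
    then have "k-d+t < k" "t < k" using assms(2) by auto
    then have "f (k-d+t) \<le> n" "1 \<le> f t" using assms(1) by auto
    then show "f (k-d+t) - f t \<le> n - 1" by simp
  qed
  finally show ?thesis by simp
qed

lemma sum_Icc_int: "2 * (\<Sum>d\<in>{1..m::nat}. int d) = int m * (int m + 1)"
  by (induction m) (auto simp: algebra_simps)

lemma lin2:
  fixes D N s X Y :: real
  shows "D \<le> 2 * (N + s) + 1 \<Longrightarrow> 2 * s \<le> Y \<Longrightarrow> N \<le> X \<Longrightarrow> D \<le> 2 * (X + Y / 2) + 1"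
  by (simp add: algebra_simps)

lemma main_bound:
  assumes A: "A \<subseteq> {1..int n}" and k: "card A = k" and mK: "m + K = k"
  shows "real (card (diffset A)) \<le> 2 * ((real m + 1) * sqrt n + real K * (real K - 1)/2) + 1"
proof -
  have finA: "finite A" using A finite_subset by blast
  have "\<exists>xs. sorted_wrt (<) xs \<and> set xs = A \<and> length xs = k"
    by (rule exI[of _ "sorted_list_of_set A"]) (use finA k in simp)
  then obtain xs where xs: "sorted_wrt (<) xs" "set xs = A" "length xs = k" by blast
  define f where "f i = xs ! i" for i
  have mono: "f i < f j" if "i < j" "j < k" for i j
    using sorted_wrt_nth_less[OF xs(1) that(1)] that xs(3) f_def by simp
  have fA: "f i \<in> A" if "i < k" for i using that xs f_def by auto
  have fr: "1 \<le> f i \<and> f i \<le> int n" if "i < k" for i using fA[OF that] A by auto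
  define P where "P = {d \<in> diffset A. d > 0}"
  define T1 where "T1 = {(i,j). i<j \<and> j<k \<and> j \<le> i+m}"
  define T2 where "T2 = {(i,j). i<j \<and> j<k \<and> i+m < j}"
  define g where "g = (\<lambda>(i,j). f j - f i)"
  define S1 where "S1 = g ` T1"
  define S2 where "S2 = g ` T2"
  have finT1: "finite T1" unfolding T1_def
    by (rule finite_subset[of _ "{..<k} \<times> {..<k}"]) auto
  have finT2: "finite T2" unfolding T2_def
    by (rule finite_subset[of _ "{..<k} \<times> {..<k}"]) auto
  have PS: "P \<subseteq> S1 \<union> S2"
  proof
    fix d assume "d \<in> P"
    then obtain a b where ab: "a \<in> A" "b \<in> A" "d = a - b" "d > 0"
      unfolding P_def diffset_def by auto
    obtain j where j: "j < k" "a = f j" using ab(1) xs f_def by (metis in_set_conv_nth)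
    obtain i where i: "i < k" "b = f i" using ab(2) xs f_def by (metis in_set_conv_nth)
    have "i < j"
    proof (rule ccontr)
      assume "\<not> i < j"
      then have "j = i \<or> j < i" by auto
      then have "f j \<le> f i" using mono[of j i] i by auto
      then show False using ab i j by simp
    qed
    then show "d \<in> S1 \<union> S2" unfolding S1_def S2_def T1_def T2_def g_def
      using i j ab by (cases "j \<le> i + m") force+
  qed
  have finP: "finite P" using PS finT1 finT2 S1_def S2_def
    by (meson finite_Un finite_imageI finite_subset)
  have DP: "diffset A \<subseteq> P \<union> uminus ` P \<union> {0}"
  proof
    fix x assume x: "x \<in> diffset A"
    then obtain a b where "a \<in> A" "b \<in> A" "x = a - b" unfolding diffset_def by auto
    then have "-x \<in> diffset A" unfolding diffset_def by force
    then show "x \<in> P \<union> uminus ` P \<union> {0}" using x unfolding P_def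
      by (cases "x > 0"; cases "x = 0") force+
  qed
  have cD: "card (diffset A) \<le> 2 * card P + 1"
  proof -
    have "card (diffset A) \<le> card (P \<union> uminus ` P \<union> {0})"
      using card_mono[OF _ DP] finP by simp
    also have "\<dots> \<le> card (P \<union> uminus ` P) + card {0::int}"
      by (rule card_Un_le)
    also have "\<dots> \<le> card P + card (uminus ` P) + 1"
      using card_Un_le[of P "uminus ` P"] by simp
    also have "\<dots> \<le> 2 * card P + 1" using card_image_le[OF finP, of uminus] by simp
    finally show ?thesis .
  qed
  have cP: "card P \<le> card S1 + card S2"
  proof -
    have "finite (S1 \<union> S2)" using finT1 finT2 S1_def S2_def by simp
    then have "card P \<le> card (S1 \<union> S2)" using card_mono[OF _ PS] by simp
    then show ?thesis using card_Un_le[of S1 S2] by simp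
  qed
  have cS2: "2 * card S2 \<le> K * (K - 1)"
  proof -
    have "card S2 \<le> card T2" unfolding S2_def using card_image_le[OF finT2] by simp
    also have "\<dots> \<le> card {(i::nat,j). i<j \<and> j<K}"
    proof (rule card_inj_on_le[where f = "\<lambda>(i,j). (i, j - m)"])
      show "inj_on (\<lambda>(i, j). (i, j - m)) T2" unfolding T2_def inj_on_def by auto
      show "(\<lambda>(i, j). (i, j - m)) ` T2 \<subseteq> {(i, j). i < j \<and> j < K}"
        unfolding T2_def using mK by auto
      show "finite {(i::nat,j). i<j \<and> j<K}"
        by (rule finite_subset[of _ "{..<K} \<times> {..<K}"]) auto
    qed
    finally show ?thesis using card_pairs[of K] by simp
  qed
  define N where "N = card S1"
  have finS1: "finite S1" unfolding S1_def using finT1 by simp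
  have S1pos: "\<forall>s\<in>S1. s \<ge> 1"
    unfolding S1_def T1_def g_def using mono by fastforce
  have "int N * (int N + 1) \<le> 2 * \<Sum> S1"
    unfolding N_def by (rule sum_distinct_pos[OF finS1 S1pos])
  also have "\<Sum> S1 \<le> sum g T1"
  proof -
    have g0: "0 \<le> g i" if "i \<in> T1" for i using S1pos S1_def that by fastforce
    show ?thesis unfolding S1_def using sum_image_le[OF finT1, of "\<lambda>x. x" g, OF g0]
      by (simp add: o_def)
  qed
  also have "T1 = (\<lambda>(d,i). (i, i+d)) ` (SIGMA d:{1..m}. {..<k-d})"
  proof
    show "T1 \<subseteq> (\<lambda>(d,i). (i, i+d)) ` (SIGMA d:{1..m}. {..<k-d})"
    proof
      fix p assume "p \<in> T1"
      then obtain i j where p: "p = (i,j)" "i<j" "j<k" "j \<le> i+m" unfolding T1_def by auto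
      then show "p \<in> (\<lambda>(d,i). (i, i+d)) ` (SIGMA d:{1..m}. {..<k-d})"
        by (intro image_eqI[of _ _ "(j-i, i)"]) auto
    qed
    show "(\<lambda>(d,i). (i, i+d)) ` (SIGMA d:{1..m}. {..<k-d}) \<subseteq> T1"
      unfolding T1_def by auto
  qed
  also have "sum g ((\<lambda>(d,i). (i, i+d)) ` (SIGMA d:{1..m}. {..<k-d}))
      = (\<Sum>d\<in>{1..m}. \<Sum>i<k-d. f (i+d) - f i)"
    by (subst sum.reindex) (auto simp: inj_on_def g_def sum.Sigma intro!: sum.cong split: prod.split)
  also have "\<dots> \<le> (\<Sum>d\<in>{1..m}. int d * (int n - 1))"
    by (rule sum_mono, rule telescope) (use fr mK in auto)
  also have "\<dots> = (\<Sum>d\<in>{1..m}. int d) * (int n - 1)" by (simp add: sum_distrib_right)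
  finally have that_ineq: "int N * (int N + 1) \<le> int m * (int m + 1) * (int n - 1)"
    using sum_Icc_int[of m] by (simp add: algebra_simps)
  have rN: "real N * (real N + 1) \<le> real m * (real m + 1) * (real n - 1)"
  proof -
    have "real_of_int (int N * (int N + 1)) \<le> real_of_int (int m * (int m + 1) * (int n - 1))"
      using that_ineq by (simp only: of_int_le_iff)
    then show ?thesis by simp
  qed
  have "real N ^ 2 \<le> real n * (real m + 1) ^ 2"
  proof -
    have "0 \<le> real n * (real m + 1)" by simp
    then have "real m * (real m + 1) * (real n - 1) \<le> real n * (real m + 1) ^ 2"
      by (simp add: power2_eq_square algebra_simps)
    moreover have "real N ^ 2 \<le> real N * (real N + 1)" by (simp add: power2_eq_square algebra_simps)
    ultimately show ?thesis using rN by linarith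
  qed
  then have "real N \<le> sqrt (real n * (real m + 1) ^ 2)" using real_le_rsqrt by blast
  then have cS1: "real N \<le> (real m + 1) * sqrt n" by (simp add: real_sqrt_mult mult.commute)
  have "real (card (diffset A)) \<le> 2 * (real N + real (card S2)) + 1"
  proof -
    have "2 * card P + 1 \<le> 2 * (N + card S2) + 1" using cP unfolding N_def by simp
    then have "card (diffset A) \<le> 2 * (N + card S2) + 1" using cD by (rule le_trans[rotated])
    then have "real (card (diffset A)) \<le> real (2 * (N + card S2) + 1)" by (simp only: of_nat_le_iff)
    then show ?thesis by simp
  qed
  moreover have "2 * real (card S2) \<le> real K * (real K - 1)"
  proof -
    have "real (2 * card S2) \<le> real (K * (K - 1))" using cS2 by (simp only: of_nat_le_iff)
    moreover have "real (K * (K - 1)) = real K * (real K - 1)" by (cases K) (auto simp: algebra_simps)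
    ultimately have "real (2 * card S2) \<le> real K * (real K - 1)" by (rule ord_le_eq_trans)
    then show ?thesis by simp
  qed
  ultimately show ?thesis using cS1 by (rule lin2)
qed

lemma eps_small: "(\<lambda>n::nat. 3 * sqrt (real n) + 1) \<in> o(\<lambda>n. real n)"
proof (rule landau_o.smallI)
  fix c :: real assume c: "0 < c"
  define N where "N = nat \<lceil>(4/c)^2\<rceil> + 1"
  show "\<forall>\<^sub>F n in sequentially. norm (3 * sqrt (real n) + 1) \<le> c * norm (real n)"
    unfolding eventually_sequentially
  proof (intro exI allI impI)
    fix n assume "N \<le> n"
    then have n1: "1 \<le> real n" and n2: "(4/c)^2 \<le> real n" unfolding N_def
      by (auto, linarith)
    have s1: "1 \<le> sqrt (real n)" using n1 by simp
    have "4/c \<le> sqrt (real n)" using n2 real_le_rsqrt by blast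
    then have "4 \<le> c * sqrt (real n)" using c by (simp add: field_simps)
    then have "4 * sqrt (real n) \<le> c * sqrt (real n) * sqrt (real n)"
      using s1 by (intro mult_right_mono) auto
    also have "\<dots> = c * real n" by simp
    finally have "4 * sqrt (real n) \<le> c * real n" .
    moreover have "norm (3 * sqrt (real n) + 1) = 3 * sqrt (real n) + 1" by simp
    moreover have "c * norm (real n) = c * real n" by simp
    ultimately show "norm (3 * sqrt (real n) + 1) \<le> c * norm (real n)" using s1 by linarith
  qed
qed

lemma lin_comb:
  fixes D X Y a b n r :: real
  shows "D \<le> 2 * (X + Y / 2) + 1 \<Longrightarrow> X \<le> a * b - n + r \<Longrightarrow> Y \<le> n + r
    \<Longrightarrow> D \<le> 2 * a * b - n + (3 * r + 1)"
  by (simp add: algebra_simps)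

theorem theorem7:
  shows "\<exists>\<epsilon> :: nat \<Rightarrow> real. \<epsilon> \<in> o(\<lambda>n. real n) \<and>
    (\<exists>N. \<forall>n \<ge> N. \<forall>k :: nat. sqrt (real n) \<le> real k \<and> k \<le> n \<longrightarrow>
       real (dkn k n) \<le> 2 * real k * sqrt (real n) - real n + \<epsilon> n)"
proof (intro exI conjI allI impI)
  show "(\<lambda>n::nat. 3 * sqrt (real n) + 1) \<in> o(\<lambda>n. real n)" by (rule eps_small)
next
  fix n k :: nat
  assume "0 \<le> n" and hk: "sqrt (real n) \<le> real k \<and> k \<le> n"
  define S where "S = {card (diffset A) | A. A \<subseteq> {1..int n} \<and> card A = k}"
  have "S = (\<lambda>A. card (diffset A)) ` {A. A \<subseteq> {1..int n} \<and> card A = k}"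
    unfolding S_def by auto
  moreover have "finite {A. A \<subseteq> {1..int n} \<and> card A = k}"
    by (rule finite_subset[of _ "Pow {1..int n}"]) auto
  ultimately have finS: "finite S" by simp
  have "card (diffset {1..int k}) \<in> S" unfolding S_def using hk by force
  then have "S \<noteq> {}" by auto
  then have "dkn k n \<in> S" unfolding dkn_def S_def[symmetric] using finS Max_in by blast
  then obtain A where A: "A \<subseteq> {1..int n}" "card A = k" "dkn k n = card (diffset A)"
    unfolding S_def by auto
  define K where "K = nat \<lceil>sqrt (real n)\<rceil>"
  have "-1 < sqrt (real n)" using real_sqrt_ge_zero[of "real n"] by linarith
  then have c0: "0 \<le> \<lceil>sqrt (real n)\<rceil>" by simp
  have RK: "real K = of_int \<lceil>sqrt (real n)\<rceil>" unfolding K_def using c0 by simp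
  have "\<lceil>sqrt (real n)\<rceil> \<le> int k" by (rule ceiling_le) (use hk in simp)
  then have Kk: "K \<le> k" unfolding K_def using hk by simp
  have Kl: "sqrt (real n) \<le> real K" unfolding RK by (rule le_of_int_ceiling)
  have Ku: "real K \<le> sqrt (real n) + 1" unfolding RK
    using ceiling_correct[of "sqrt (real n)"] by simp
  have mb: "real (card (diffset A)) \<le> 2 * ((real (k - K) + 1) * sqrt n + real K * (real K - 1)/2) + 1"
    by (rule main_bound[OF A(1) A(2)]) (use Kk in simp)
  have s2: "sqrt (real n) * sqrt (real n) = real n" by simp
  have e1: "real (k - K) = real k - real K" using Kk by simp
  have "real K * (real K - 1) \<le> (sqrt n + 1) * sqrt n"
  proof (cases "K = 0")
    case True then show ?thesis by simp
  next
    case False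
    then have "0 \<le> real K - 1" by simp
    then show ?thesis using Ku by (intro mult_mono) auto
  qed
  moreover have "(real (k - K) + 1) * sqrt n \<le> (real k - sqrt n + 1) * sqrt n"
    using e1 Kl by (intro mult_right_mono) auto
  ultimately have h2: "real K * (real K - 1) \<le> real n + sqrt n"
    and h1: "(real (k - K) + 1) * sqrt n \<le> real k * sqrt n - real n + sqrt n"
    by (simp_all add: algebra_simps)
  have "real (dkn k n) = real (card (diffset A))" using A(3) by simp
  then show "real (dkn k n) \<le> 2 * real k * sqrt (real n) - real n + (3 * sqrt (real n) + 1)"
    using lin_comb[OF mb h1 h2] by simp
qed

end
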